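(* Let $n$ be a positive even integer and $a=\sqrt[n]{n+1}$. Let $\eta:(-a,a)\to(-a,a)$ be the involution defined by $\eta(0)=0$ and, for $u\neq0$, $\eta(u)$ is the unique point with $u\,\eta(u)<0$ and $W(\eta(u))=W(u)$. Define $$T_n(u)=(n+1)\frac{\int_{\eta(u)}^{u}t^n\,dt}{\int_{\eta(u)}^{u}dt}=\sum_{k=0}^{n}u^{n-k}\eta(u)^k .$$ Then $T_n'(u)>0$ for all $u\in(0,a)$.
   Context: $W(u)=\frac{u^2}{2}-\frac{u^{n+2}}{(n+1)(n+2)}$; $W$ is strictly decreasing on $(-a,0)$ and strictly increasing on $(0,a)$, with $W(-a)=W(a)=d_n=\frac{n(n+1)^{2/n}}{2(n+2)}$, so $\eta$ is well defined. *)

theory Defs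
  imports "HOL-Analysis.Analysis"
begin

definition W :: "nat \<Rightarrow> real \<Rightarrow> real" where
  "W n u = u^2 / 2 - u^(n+2) / ((real n + 1) * (real n + 2))"

definition aa :: "nat \<Rightarrow> real" where
  "aa n = root n (real n + 1)"

definition eta :: "nat \<Rightarrow> real \<Rightarrow> real" where
  "eta n u = (if u = 0 then 0 else
     (THE v. v \<in> {- aa n<..<aa n} \<and> u * v < 0 \<and> W n v = W n u))"

definition T :: "nat \<Rightarrow> real \<Rightarrow> real" where
  "T n u = (\<Sum>k\<le>n. u^(n-k) * (eta n u)^k)"

end

theory Submission
  imports Defs
begin

lemma W_even: "even n \<Longrightarrow> W n (-x) = W n x"
  by (simp add: W_def)

lemma aa_pos: "n > 0 \<Longrightarrow> aa n > 0"
  unfolding aa_def by simp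

lemma aa_pow: "n > 0 \<Longrightarrow> aa n ^ n = real n + 1"
  unfolding aa_def by (simp add: real_root_pow_pos2)

lemma W_deriv: "(W n has_real_derivative (x - x^(n+1)/(real n + 1))) (at x)"
proof -
  have p: "real n + 2 \<noteq> 0" "real n + 1 \<noteq> 0" by linarith+
  have d1: "((\<lambda>z. z^2/2) has_real_derivative (real 2 * x^(2 - Suc 0))/2) (at x)"
    by (rule DERIV_cdivide[OF DERIV_pow])
  have d2: "((\<lambda>z. z^(n+2)/((real n + 1) * (real n + 2))) has_real_derivative
     (real (n+2) * x^(n+2 - Suc 0))/((real n + 1) * (real n + 2))) (at x)"
    by (rule DERIV_cdivide[OF DERIV_pow])
  have e: "(real 2 * x^(2 - Suc 0))/2 - (real (n+2) * x^(n+2 - Suc 0))/((real n + 1) * (real n + 2))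
     = x - x^(n+1)/(real n + 1)"
  proof -
    have "real (n+2) * x^(n+2 - Suc 0) / ((real n + 1) * (real n + 2)) = x^(n+1)/(real n + 1)"
      using p by (simp add: add.commute)
    thus ?thesis by simp
  qed
  show ?thesis unfolding W_def using DERIV_diff[OF d1 d2] e by simp
qed

lemma W_strict: assumes "n > 0" "0 \<le> x" "x < y" "y < aa n"
  shows "W n x < W n y"
proof (rule DERIV_pos_imp_increasing_open[OF assms(3)])
  fix t assume t: "x < t" "t < y"
  have "t ^ n < aa n ^ n"
    using t assms by (intro power_strict_mono) auto
  hence "t^n < real n + 1" using aa_pow[OF assms(1)] by simp
  hence "t * t^n < t * (real n + 1)"
    using t assms by (intro mult_strict_left_mono) auto
  hence "t^(n+1)/(real n + 1) < t"
    by (simp add: field_simps)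
  thus "\<exists>y. (W n has_real_derivative y) (at t) \<and> 0 < y"
    using W_deriv by (intro exI) (auto simp: field_simps)
next
  show "continuous_on {x..y} (W n)"
    unfolding W_def by (intro continuous_intros) auto
qed

lemma W_inj: assumes "n > 0" "0 \<le> x" "x < aa n" "0 \<le> y" "y < aa n" "W n x = W n y"
  shows "x = y"
  using W_strict[OF assms(1) assms(2) _ assms(5)] W_strict[OF assms(1) assms(4) _ assms(3)] assms(6)
  by (metis less_irrefl linorder_neqE_linordered_idom)

lemma eta_eq: assumes "n > 0" "even n" "0 < u" "u < aa n"
  shows "eta n u = -u"
proof -
  have "(THE v. v \<in> {- aa n<..<aa n} \<and> u * v < 0 \<and> W n v = W n u) = -u"
  proof (rule the_equality)
    show "- u \<in> {- aa n<..<aa n} \<and> u * - u < 0 \<and> W n (- u) = W n u"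
      using assms W_even[OF assms(2)] by auto
  next
    fix v assume v: "v \<in> {- aa n<..<aa n} \<and> u * v < 0 \<and> W n v = W n u"
    hence "v < 0" using assms by (simp add: mult_less_0_iff)
    hence "W n (-v) = W n u" using v W_even[OF assms(2), of v] by simp
    hence "-v = u" using W_inj[OF assms(1), of "-v" u] v \<open>v<0\<close> assms by auto
    thus "v = -u" by simp
  qed
  thus ?thesis using assms unfolding eta_def by simp
qed

lemma alt_sum: "(\<Sum>k\<le>2*m. (-1::real)^k) = 1"
  by (induction m) (auto simp: numeral_2_eq_2)

lemma T_eq: assumes "n > 0" "even n" "0 < u" "u < aa n"
  shows "T n u = u ^ n"
proof -
  obtain m where m: "n = 2*m" using assms(2) by blast
  have "T n u = (\<Sum>k\<le>n. u^(n-k) * (-u)^k)"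
    unfolding T_def using eta_eq[OF assms] by simp
  also have "\<dots> = (\<Sum>k\<le>n. u^n * (-1)^k)"
  proof (rule sum.cong)
    fix k assume "k \<in> {..n}"
    hence "u^(n-k) * u^k = u^n" by (simp add: power_add[symmetric])
    thus "u^(n-k) * (-u)^k = u^n * (-1)^k"
      by (metis (no_types, lifting) mult.assoc mult.commute power_minus)
  qed simp
  also have "\<dots> = u^n" using alt_sum[of m] m by (simp add: sum_distrib_left[symmetric])
  finally show ?thesis .
qed

theorem mainTheorem6:
  fixes n :: nat and u :: real
  assumes "n > 0" and "even n" and "0 < u" and "u < aa n"
  shows "T n differentiable (at u) \<and> deriv (T n) u > 0"
proof -
  have d0: "((\<lambda>x. x^n) has_real_derivative (real n * u^(n-1))) (at u)"
    by (auto intro!: derivative_eq_intros)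
  have d: "(T n has_real_derivative (real n * u^(n-1))) (at u)"
    by (rule has_field_derivative_transform_within_open[OF d0, of "{0<..<aa n}"])
       (use assms T_eq in auto)
  have "real n * u^(n-1) > 0" using assms by simp
  thus ?thesis using d DERIV_imp_deriv real_differentiable_def
    by (metis differentiable_def has_field_derivative_imp_has_derivative)
qed

end
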